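(* Let $T$ be an ergodic probability preserving transformation of a standard probability space $(X,\mathcal B,m)$, let $G=\mathbb R$ or $G=\mathbb T$, and let $\varphi:X\to G$ be measurable with $T_\varphi(x,y)=(Tx,y+\varphi(x))$ ergodic. If $\mathcal E_\varphi\ne\{\mathrm{Id}\}$, then $\varphi$ is aperiodic.
   Context: $\mathcal E_\varphi$ is the set of surjective continuous group endomorphisms $w$ of $G$ for which there exist a non-singular transformation $S$ of $X$ commuting with $T$ and a measurable $f:X\to G$ such that $(x,y)\mapsto(Sx,f(x)+w(y))$ is a non-singular transformation commuting with $T_\varphi$. The function $\varphi$ is aperiodic if every eigenfunction of $T_\varphi$ depends only on $x$: whenever $f:X\times G\to\mathbb T$ is measurable with $f\circ T_\varphi=\lambda f$ for some $\lambda\in\mathbb T$, there is measurable $g:X\to\mathbb T$ with $f(x,y)=g(x)$ a.e. (so every eigenvalue of $T_\varphi$ is an eigenvalue of $T$). *)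

theory Defs
  imports "HOL-Probability.Probability"
begin

definition ergodic :: "'a measure \<Rightarrow> ('a \<Rightarrow> 'a) \<Rightarrow> bool" where
  "ergodic N R \<longleftrightarrow> (\<forall>A\<in>sets N. R -` A \<inter> space N = A \<longrightarrow>
      emeasure N A = 0 \<or> emeasure N (space N - A) = 0)"

definition nonsingular :: "'a measure \<Rightarrow> ('a \<Rightarrow> 'a) \<Rightarrow> bool" where
  "nonsingular N S \<longleftrightarrow> S \<in> N \<rightarrow>\<^sub>M N \<and>
      (\<forall>A\<in>sets N. emeasure N (S -` A \<inter> space N) = 0 \<longleftrightarrow> emeasure N A = 0)"

definition skew :: "('a \<Rightarrow> 'a) \<Rightarrow> ('g \<Rightarrow> 'g \<Rightarrow> 'g) \<Rightarrow> ('a \<Rightarrow> 'g) \<Rightarrow> 'a \<times> 'g \<Rightarrow> 'a \<times> 'g" where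
  "skew T add \<phi> = (\<lambda>(x, y). (T x, add y (\<phi> x)))"

text \<open>The circle group T, realised as the unit circle in the complex plane (group operation *),
  with (normalised) Haar measure: the image of Lebesgue measure on [0,1) under t \<mapsto> exp(2 pi i t).\<close>
definition circle :: "complex set" where
  "circle = sphere 0 1"

definition circle_measure :: "complex measure" where
  "circle_measure = distr (restrict_space lborel {0..<1}) (restrict_space borel circle)
      (\<lambda>t::real. cis (2 * pi * t))"

text \<open>The set E_phi, for a group G with carrier Gc, operation add and Haar measure H.
  Endomorphisms are taken extensional (undefined outside Gc), so Id is restrict id Gc.\<close>
definition E_set :: "'a measure \<Rightarrow> ('a \<Rightarrow> 'a) \<Rightarrow> ('g::topological_space) set \<Rightarrow>
    ('g \<Rightarrow> 'g \<Rightarrow> 'g) \<Rightarrow> 'g measure \<Rightarrow> ('a \<Rightarrow> 'g) \<Rightarrow> ('g \<Rightarrow> 'g) set" where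
  "E_set M T Gc add H \<phi> = {w. w \<in> extensional Gc \<and> w ` Gc = Gc \<and> continuous_on Gc w \<and>
      (\<forall>a\<in>Gc. \<forall>b\<in>Gc. w (add a b) = add (w a) (w b)) \<and>
      (\<exists>S f. nonsingular M S \<and> (AE x in M. S (T x) = T (S x)) \<and>
         f \<in> M \<rightarrow>\<^sub>M H \<and> (\<forall>x\<in>space M. f x \<in> Gc) \<and>
         nonsingular (M \<Otimes>\<^sub>M H) (\<lambda>(x, y). (S x, add (f x) (w y))) \<and>
         (AE z in M \<Otimes>\<^sub>M H. (\<lambda>(x, y). (S x, add (f x) (w y))) (skew T add \<phi> z)
                          = skew T add \<phi> ((\<lambda>(x, y). (S x, add (f x) (w y))) z)))}"

definition aperiodic :: "'a measure \<Rightarrow> ('a \<Rightarrow> 'a) \<Rightarrow> ('g \<Rightarrow> 'g \<Rightarrow> 'g) \<Rightarrow> 'g measure \<Rightarrow>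
    ('a \<Rightarrow> 'g) \<Rightarrow> bool" where
  "aperiodic M T add H \<phi> \<longleftrightarrow>
     (\<forall>(f :: 'a \<times> 'g \<Rightarrow> complex) (c::complex).
        f \<in> borel_measurable (M \<Otimes>\<^sub>M H) \<and> (\<forall>z\<in>space (M \<Otimes>\<^sub>M H). f z \<in> circle) \<and>
        c \<in> circle \<and> (AE z in M \<Otimes>\<^sub>M H. f (skew T add \<phi> z) = c * f z)
        \<longrightarrow> (\<exists>g \<in> borel_measurable M. (\<forall>x\<in>space M. g x \<in> circle) \<and>
               (AE z in M \<Otimes>\<^sub>M H. f z = g (fst z))))"

end

theory Submission
  imports Defs
begin


lemma AE_pullback:
  assumes G: "G \<in> N \<rightarrow>\<^sub>M N"
    and ns: "\<And>A. A \<in> sets N \<Longrightarrow> emeasure N A = 0 \<Longrightarrow> emeasure N (G -` A \<inter> space N) = 0"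
    and P: "AE z in N. P z"
  shows "AE z in N. P (G z)"
proof -
  from P obtain A where A: "{x \<in> space N. \<not> P x} \<subseteq> A" "emeasure N A = 0" "A \<in> sets N"
    by (rule AE_E)
  have "G -` A \<inter> space N \<in> null_sets N"
    using ns[OF A(3,2)] measurable_sets[OF G A(3)] by auto
  moreover have "{x \<in> space N. \<not> P (G x)} \<subseteq> G -` A \<inter> space N"
    using A(1) measurable_space[OF G] by auto
  ultimately show ?thesis by (rule AE_I')
qed

lemma preserving_ns:
  assumes G: "G \<in> N \<rightarrow>\<^sub>M N" and d: "distr N N G = N" and A: "A \<in> sets N" "emeasure N A = 0"
  shows "emeasure N (G -` A \<inter> space N) = 0"
  using emeasure_distr[OF G A(1)] d A(2) by simp

lemma ergodic_AE_set:
  assumes erg: "ergodic N F" and F: "F \<in> N \<rightarrow>\<^sub>M N"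
    and ns: "\<And>A. A \<in> sets N \<Longrightarrow> emeasure N A = 0 \<Longrightarrow> emeasure N (F -` A \<inter> space N) = 0"
    and A: "A \<in> sets N" and inv: "AE z in N. (F z \<in> A \<longleftrightarrow> z \<in> A)"
  shows "emeasure N A = 0 \<or> emeasure N (space N - A) = 0"
proof -
  have Fn: "(F ^^ n) \<in> N \<rightarrow>\<^sub>M N" for n
    by (induction n) (auto intro: measurable_compose[OF _ F])
  have invn: "AE z in N. ((F ^^ n) z \<in> A \<longleftrightarrow> z \<in> A)" for n
  proof (induction n)
    case 0 then show ?case by simp
  next
    case (Suc n)
    have "AE z in N. ((F ^^ n) (F z) \<in> A \<longleftrightarrow> F z \<in> A)"
      by (rule AE_pullback[OF F ns Suc])
    with inv show ?case
      by eventually_elim (simp add: funpow_swap1)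
  qed
  define B where "B = {z \<in> space N. \<forall>n. \<exists>k\<ge>n. (F ^^ k) z \<in> A}"
  have Bs: "B \<in> sets N"
    using Fn[measurable] A[measurable] unfolding B_def by measurable
  have "F -` B \<inter> space N = B"
  proof -
    have "(\<forall>n. \<exists>k\<ge>n. (F ^^ k) (F z) \<in> A) \<longleftrightarrow> (\<forall>n. \<exists>k\<ge>n. (F ^^ k) z \<in> A)" for z
    proof -
      have e: "(F ^^ k) (F z) = (F ^^ Suc k) z" for k by (simp add: funpow_swap1)
      show ?thesis unfolding e
        by (metis Suc_le_D Suc_le_mono le_SucI)
    qed
    then show ?thesis unfolding B_def using measurable_space[OF F] by auto
  qed
  with erg Bs have "emeasure N B = 0 \<or> emeasure N (space N - B) = 0"
    unfolding ergodic_def by auto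
  moreover have "AE z in N. (z \<in> B \<longleftrightarrow> z \<in> A)"
  proof -
    have "AE z in N. \<forall>n. ((F ^^ n) z \<in> A \<longleftrightarrow> z \<in> A)"
      using invn by (simp add: AE_all_countable)
    then show ?thesis
    proof (rule AE_mp, intro AE_I2 impI)
      fix z assume z: "z \<in> space N" and h: "\<forall>n. ((F ^^ n) z \<in> A \<longleftrightarrow> z \<in> A)"
      show "(z \<in> B \<longleftrightarrow> z \<in> A)" unfolding B_def using z h by auto
    qed
  qed
  then have "emeasure N B = emeasure N A" "emeasure N (space N - B) = emeasure N (space N - A)"
    using Bs A by (auto intro!: emeasure_eq_AE)
  ultimately show ?thesis by simp
qed


lemma ergodic_AE_real:
  assumes erg: "ergodic N F" and F: "F \<in> N \<rightarrow>\<^sub>M N"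
    and ns: "\<And>A. A \<in> sets N \<Longrightarrow> emeasure N A = 0 \<Longrightarrow> emeasure N (F -` A \<inter> space N) = 0"
    and q[measurable]: "(q :: _ \<Rightarrow> real) \<in> borel_measurable N" and bd: "\<And>z. z \<in> space N \<Longrightarrow> \<bar>q z\<bar> \<le> 1"
    and inv: "AE z in N. q (F z) = q z" and pos: "emeasure N (space N) \<noteq> 0"
  shows "\<exists>k. AE z in N. q z = k"
proof -
  define A where "A r = {z \<in> space N. q z < r}" for r
  have As: "A r \<in> sets N" for r unfolding A_def by measurable
  have dich: "emeasure N (A r) = 0 \<or> emeasure N (space N - A r) = 0" for r
  proof (rule ergodic_AE_set[OF erg F ns As])
    show "AE z in N. (F z \<in> A r \<longleftrightarrow> z \<in> A r)"
      using AE_space inv by eventually_elim (use measurable_space[OF F] in \<open>auto simp: A_def\<close>)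
  qed
  define L where "L = {r. emeasure N (A r) = 0}"
  have m2: "-2 \<in> L"
  proof -
    have "A (-2) = {}" unfolding A_def using bd by force
    then show ?thesis unfolding L_def by simp
  qed
  have ub: "r \<le> 2" if "r \<in> L" for r
  proof (rule ccontr)
    assume "\<not> r \<le> 2"
    then have "A r = space N" unfolding A_def using bd by force
    with that pos show False unfolding L_def by simp
  qed
  then have bdd: "bdd_above L" by (rule bdd_aboveI)
  define k where "k = Sup L"
  have low: "AE z in N. r \<le> q z" if "r < k" for r
  proof -
    obtain r' where "r' \<in> L" "r < r'" using \<open>r < k\<close> m2 bdd unfolding k_def
      by (metis empty_iff less_cSup_iff)
    then have "emeasure N (A r) = 0"
      using emeasure_mono[of "A r" "A r'" N] As unfolding L_def A_def
      by (auto intro: antisym simp: subset_eq)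
    then have "A r \<in> null_sets N" using As by auto
    with AE_space show ?thesis by (auto simp: A_def dest!: AE_not_in elim!: AE_mp)
  qed
  have high: "AE z in N. q z < r" if "k < r" for r
  proof -
    have "r \<notin> L" using that cSup_upper[OF _ bdd] unfolding k_def by force
    then have "emeasure N (space N - A r) = 0" using dich unfolding L_def by auto
    then have "space N - A r \<in> null_sets N" using As by auto
    with AE_space show ?thesis by (auto simp: A_def dest!: AE_not_in elim!: AE_mp)
  qed
  have "AE z in N. \<forall>n::nat. k - 1 / (Suc n) \<le> q z \<and> q z < k + 1 / Suc n"
    unfolding AE_all_countable
    using low high by (auto intro: AE_conjI)
  then have "AE z in N. q z = k"
  proof eventually_elim
    case (elim z)
    show ?case
    proof (rule ccontr)
      assume ne: "q z \<noteq> k"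
      then have "0 < \<bar>q z - k\<bar>" by simp
      then obtain n where n: "1 / real (Suc n) < \<bar>q z - k\<bar>"
        by (metis nat_approx_posE of_nat_Suc)
      from elim[rule_format, of n] n show False by (auto simp: abs_if split: if_splits)
    qed
  qed
  then show ?thesis by blast
qed

lemma ergodic_AE_complex:
  assumes erg: "ergodic N F" and F: "F \<in> N \<rightarrow>\<^sub>M N"
    and ns: "\<And>A. A \<in> sets N \<Longrightarrow> emeasure N A = 0 \<Longrightarrow> emeasure N (F -` A \<inter> space N) = 0"
    and q[measurable]: "(q :: _ \<Rightarrow> complex) \<in> borel_measurable N" and bd: "\<And>z. z \<in> space N \<Longrightarrow> norm (q z) \<le> 1"
    and inv: "AE z in N. q (F z) = q z" and pos: "emeasure N (space N) \<noteq> 0"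
  shows "\<exists>k. AE z in N. q z = k"
proof -
  have "\<exists>a. AE z in N. Re (q z) = a"
    by (rule ergodic_AE_real[OF erg F ns]) (use inv pos in \<open>auto intro: order_trans[OF abs_Re_le_cmod bd]\<close>)
  then obtain a where a: "AE z in N. Re (q z) = a" ..
  have "\<exists>b. AE z in N. Im (q z) = b"
    by (rule ergodic_AE_real[OF erg F ns]) (use inv pos in \<open>auto intro: order_trans[OF abs_Im_le_cmod bd]\<close>)
  then obtain b where b: "AE z in N. Im (q z) = b" ..
  from a b have "AE z in N. q z = Complex a b" by eventually_elim (simp add: complex_eq_iff)
  then show ?thesis by blast
qed


locale skew_setup =
  fixes M :: "'a measure" and T :: "'a \<Rightarrow> 'a" and Gc :: "'g::topological_space set"
    and add :: "'g \<Rightarrow> 'g \<Rightarrow> 'g" and H :: "'g measure"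
  assumes M: "prob_space M"
    and Tm: "T \<in> M \<rightarrow>\<^sub>M M" and Td: "distr M M T = M"
    and sfH: "sigma_finite_measure H"
    and spH: "space H = Gc"
    and posH: "emeasure H Gc \<noteq> 0"
    and assoc: "\<And>a b c. add (add a b) c = add a (add b c)"
    and comm: "\<And>a b. add a b = add b a"
    and addm: "(\<lambda>p. add (fst p) (snd p)) \<in> H \<Otimes>\<^sub>M H \<rightarrow>\<^sub>M H"
    and transl: "\<And>t. t \<in> Gc \<Longrightarrow> distr H H (\<lambda>y. add y t) = H"
begin

abbreviation "\<nu> \<equiv> M \<Otimes>\<^sub>M H"

lemma closed: "a \<in> Gc \<Longrightarrow> b \<in> Gc \<Longrightarrow> add a b \<in> Gc"
  using measurable_space[OF addm, of "(a,b)"] spH by (auto simp: space_pair_measure)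

lemma add_meas2:
  assumes "f \<in> N \<rightarrow>\<^sub>M H" "g \<in> N \<rightarrow>\<^sub>M H"
  shows "(\<lambda>x. add (f x) (g x)) \<in> N \<rightarrow>\<^sub>M H"
  using measurable_compose[OF measurable_Pair[OF assms] addm] by simp

lemma shear_meas:
  assumes h: "h \<in> M \<rightarrow>\<^sub>M M" and K: "K \<in> M \<rightarrow>\<^sub>M H"
  shows "(\<lambda>(x,y). (h x, add y (K x))) \<in> \<nu> \<rightarrow>\<^sub>M \<nu>"
proof -
  have "(\<lambda>z. (h (fst z), add (snd z) (K (fst z)))) \<in> \<nu> \<rightarrow>\<^sub>M \<nu>"
    by (intro measurable_Pair add_meas2 measurable_compose[OF measurable_fst h]
        measurable_compose[OF measurable_fst K] measurable_snd)
  then show ?thesis by (simp add: case_prod_beta')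
qed

lemma shear_distr:
  assumes h: "h \<in> M \<rightarrow>\<^sub>M M" "distr M M h = M" and K: "K \<in> M \<rightarrow>\<^sub>M H"
  shows "distr \<nu> \<nu> (\<lambda>(x,y). (h x, add y (K x))) = \<nu>"
proof (rule measure_eqI)
  let ?G = "\<lambda>(x,y). (h x, add y (K x))"
  have G: "?G \<in> \<nu> \<rightarrow>\<^sub>M \<nu>" by (rule shear_meas[OF h(1) K])
  show "sets (distr \<nu> \<nu> ?G) = sets \<nu>" by simp
  fix A assume "A \<in> sets (distr \<nu> \<nu> ?G)"
  then have A: "A \<in> sets \<nu>" by simp
  interpret H: sigma_finite_measure H by (rule sfH)
  have GA: "?G -` A \<inter> space \<nu> \<in> sets \<nu>" using measurable_sets[OF G A] .
  have "emeasure (distr \<nu> \<nu> ?G) A = emeasure \<nu> (?G -` A \<inter> space \<nu>)"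
    by (rule emeasure_distr[OF G A])
  also have "\<dots> = (\<integral>\<^sup>+x. emeasure H (Pair x -` (?G -` A \<inter> space \<nu>)) \<partial>M)"
    by (rule H.emeasure_pair_measure_alt[OF GA])
  also have "\<dots> = (\<integral>\<^sup>+x. emeasure H (Pair (h x) -` A) \<partial>M)"
  proof (rule nn_integral_cong)
    fix x assume x: "x \<in> space M"
    have Kx: "K x \<in> Gc" using measurable_space[OF K x] spH by simp
    have "Pair x -` (?G -` A \<inter> space \<nu>) = (\<lambda>y. add y (K x)) -` (Pair (h x) -` A) \<inter> space H"
      using x by (auto simp: space_pair_measure)
    then have "emeasure H (Pair x -` (?G -` A \<inter> space \<nu>))
        = emeasure (distr H H (\<lambda>y. add y (K x))) (Pair (h x) -` A)"
      by (subst emeasure_distr) (auto intro!: sets_Pair1[OF A] add_meas2 measurable_const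
          simp: Kx spH)
    also have "\<dots> = emeasure H (Pair (h x) -` A)" using transl[OF Kx] by simp
    finally show "emeasure H (Pair x -` (?G -` A \<inter> space \<nu>)) = emeasure H (Pair (h x) -` A)" .
  qed
  also have "\<dots> = (\<integral>\<^sup>+x. emeasure H (Pair x -` A) \<partial>distr M M h)"
    by (rule nn_integral_distr[symmetric, OF h(1)])
       (simp add: H.measurable_emeasure_Pair[OF A])
  also have "\<dots> = emeasure \<nu> A"
    using h(2) H.emeasure_pair_measure_alt[OF A] by simp
  finally show "emeasure (distr \<nu> \<nu> ?G) A = emeasure \<nu> A" .
qed

end


lemma AE_ex_point:
  assumes "AE z in N. P z" "emeasure N (space N) \<noteq> 0"
  shows "\<exists>z\<in>space N. P z"
proof (rule ccontr)
  assume "\<not> ?thesis"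
  then have "AE z in N. False" using assms(1) by (auto elim: AE_mp)
  then have "ae_filter N = bot" by (simp add: trivial_limit_def)
  with assms(2) show False by (simp add: ae_filter_eq_bot_iff)
qed

lemma borel_measurable_cnj[measurable]:
  assumes "f \<in> borel_measurable N" shows "(\<lambda>x. cnj (f x)) \<in> borel_measurable N"
proof -
  have "(\<lambda>x. cnj x :: complex) \<in> borel_measurable borel"
    by (intro borel_measurable_continuous_onI continuous_on_cnj continuous_on_id)
  from measurable_compose[OF assms this] show ?thesis .
qed

lemma circle_norm: "z \<in> circle \<longleftrightarrow> norm z = 1"
  by (simp add: circle_def)

lemma circle_cnj: "z \<in> circle \<Longrightarrow> z * cnj z = 1"
  by (metis circle_norm complex_norm_square mult.commute power_one of_real_1)

context skew_setup
begin

lemma pos\<nu>: "emeasure \<nu> (space \<nu>) \<noteq> 0"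
proof -
  interpret H: sigma_finite_measure H by (rule sfH)
  interpret P: prob_space M by (rule M)
  have "emeasure \<nu> (space \<nu>) = emeasure M (space M) * emeasure H (space H)"
    by (simp add: space_pair_measure H.emeasure_pair_measure_Times)
  then show ?thesis using posH spH P.emeasure_space_1 by simp
qed

definition R :: "'g \<Rightarrow> 'a \<times> 'g \<Rightarrow> 'a \<times> 'g" where
  "R t = (\<lambda>(x,y). (x, add y t))"

lemma R_meas: "t \<in> Gc \<Longrightarrow> R t \<in> \<nu> \<rightarrow>\<^sub>M \<nu>"
  unfolding R_def using shear_meas[of "\<lambda>x. x" "\<lambda>_. t"] spH by auto

lemma R_distr: "t \<in> Gc \<Longrightarrow> distr \<nu> \<nu> (R t) = \<nu>"
  unfolding R_def using shear_distr[of "\<lambda>x. x" "\<lambda>_. t"] spH by (auto simp: distr_id2)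

lemma R_ns: "t \<in> Gc \<Longrightarrow> A \<in> sets \<nu> \<Longrightarrow> emeasure \<nu> A = 0 \<Longrightarrow> emeasure \<nu> (R t -` A \<inter> space \<nu>) = 0"
  using preserving_ns[OF R_meas R_distr] by blast

lemma R_comp: "R u (R t z) = R (add t u) z"
  unfolding R_def by (auto simp: assoc split: prod.splits)

context
  fixes \<phi> :: "'a \<Rightarrow> 'g"
  assumes \<phi>: "\<phi> \<in> M \<rightarrow>\<^sub>M H"
begin

abbreviation "F \<equiv> skew T add \<phi>"

lemma F_eq: "F = (\<lambda>(x,y). (T x, add y (\<phi> x)))"
  by (simp add: skew_def)

lemma F_meas: "F \<in> \<nu> \<rightarrow>\<^sub>M \<nu>"
  unfolding F_eq by (rule shear_meas[OF Tm \<phi>])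

lemma F_ns: "A \<in> sets \<nu> \<Longrightarrow> emeasure \<nu> A = 0 \<Longrightarrow> emeasure \<nu> (F -` A \<inter> space \<nu>) = 0"
  using preserving_ns[OF F_meas] shear_distr[OF Tm Td \<phi>] unfolding F_eq by blast

lemma R_F: "R t (F z) = F (R t z)"
  unfolding R_def F_eq by (auto split: prod.splits) (metis assoc comm)

lemma eigen_ratio:
  assumes erg: "ergodic \<nu> F"
    and f[measurable]: "f \<in> borel_measurable \<nu>" and fc: "\<And>z. z \<in> space \<nu> \<Longrightarrow> f z \<in> circle"
    and c: "c \<in> circle"
    and eig: "AE z in \<nu>. f (F z) = c * f z"
    and G[measurable]: "G \<in> \<nu> \<rightarrow>\<^sub>M \<nu>"
    and Geig: "AE z in \<nu>. f (G (F z)) = c * f (G z)"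
  shows "\<exists>k. AE z in \<nu>. f (G z) = k * f z"
proof -
  define q where "q z = f (G z) * cnj (f z)" for z
  have "\<exists>k. AE z in \<nu>. q z = k"
  proof (rule ergodic_AE_complex[OF erg F_meas F_ns _ _ _ pos\<nu>])
    show "q \<in> borel_measurable \<nu>" unfolding q_def by measurable
    show "norm (q z) \<le> 1" if "z \<in> space \<nu>" for z
      using fc[OF that] fc[OF measurable_space[OF G that]] by (simp add: q_def norm_mult circle_norm)
    show "AE z in \<nu>. q (F z) = q z"
      using eig Geig
    proof eventually_elim
      case (elim z)
      have "q (F z) = (c * cnj c) * q z" unfolding q_def elim by simp
      then show ?case using circle_cnj[OF c] by simp
    qed
  qed
  then obtain k where k: "AE z in \<nu>. q z = k" by blast
  have "AE z in \<nu>. f (G z) = k * f z"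
    using k AE_space
  proof eventually_elim
    case (elim z)
    then have "f (G z) = f (G z) * (f z * cnj (f z))" using circle_cnj[OF fc] by simp
    also have "\<dots> = q z * f z" unfolding q_def by simp
    finally show ?case using elim by simp
  qed
  then show ?thesis by blast
qed

end
end


context skew_setup
begin

context
  fixes \<phi> :: "'a \<Rightarrow> 'g"
  assumes \<phi>: "\<phi> \<in> M \<rightarrow>\<^sub>M H"
begin

lemma translation_invariant:
  assumes erg: "ergodic \<nu> (F \<phi>)"
    and f[measurable]: "f \<in> borel_measurable \<nu>" and fc: "\<And>z. z \<in> space \<nu> \<Longrightarrow> f z \<in> circle"
    and c: "c \<in> circle"
    and eig: "AE z in \<nu>. f (F \<phi> z) = c * f z"
    and \<Phi>: "\<Phi> \<in> \<nu> \<rightarrow>\<^sub>M \<nu>"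
    and \<Phi>ns: "\<And>A. A \<in> sets \<nu> \<Longrightarrow> emeasure \<nu> A = 0 \<Longrightarrow> emeasure \<nu> (\<Phi> -` A \<inter> space \<nu>) = 0"
    and commu: "AE z in \<nu>. \<Phi> (F \<phi> z) = F \<phi> (\<Phi> z)"
    and form: "\<And>x y. y \<in> Gc \<Longrightarrow> \<Phi> (x,y) = (S x, add (f0 x) (w y))"
    and hom: "\<And>a b. a \<in> Gc \<Longrightarrow> b \<in> Gc \<Longrightarrow> w (add a b) = add (w a) (w b)"
    and surj: "\<And>u. u \<in> Gc \<Longrightarrow> \<exists>t\<in>Gc. w t = add t u"
  shows "\<forall>u\<in>Gc. AE z in \<nu>. f (R u z) = f z"
proof
  have "\<exists>k. AE z in \<nu>. f (R t z) = k * f z" if t: "t \<in> Gc" for t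
  proof (rule eigen_ratio[OF \<phi> erg f fc c eig R_meas[OF t]])
    have "AE z in \<nu>. f (F \<phi> (R t z)) = c * f (R t z)"
      by (rule AE_pullback[OF R_meas[OF t] R_ns[OF t] eig])
    then show "AE z in \<nu>. f (R t (F \<phi> z)) = c * f (R t z)"
      by (simp add: R_F[OF \<phi>])
  qed
  then obtain ch where ch: "\<And>t. t \<in> Gc \<Longrightarrow> AE z in \<nu>. f (R t z) = ch t * f z" by metis
  have "\<exists>k. AE z in \<nu>. f (\<Phi> z) = k * f z"
  proof (rule eigen_ratio[OF \<phi> erg f fc c eig \<Phi>])
    have "AE z in \<nu>. f (F \<phi> (\<Phi> z)) = c * f (\<Phi> z)"
      by (rule AE_pullback[OF \<Phi> \<Phi>ns eig])
    with commu show "AE z in \<nu>. f (\<Phi> (F \<phi> z)) = c * f (\<Phi> z)"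
      by eventually_elim simp
  qed
  then obtain \<kappa> where \<kappa>: "AE z in \<nu>. f (\<Phi> z) = \<kappa> * f z" by blast
  fix u assume u: "u \<in> Gc"
  obtain t where t: "t \<in> Gc" "w t = add t u" using surj[OF u] by blast
  have a1: "AE z in \<nu>. f (\<Phi> (R t z)) = \<kappa> * f (R t z)"
    by (rule AE_pullback[OF R_meas[OF t(1)] R_ns[OF t(1)] \<kappa>])
  have a3: "AE z in \<nu>. \<Phi> (R t z) = R u (R t (\<Phi> z))"
    using AE_space
  proof eventually_elim
    case (elim z)
    obtain x y where z: "z = (x,y)" by fastforce
    have y: "y \<in> Gc" using elim z spH by (auto simp: space_pair_measure)
    have "\<Phi> (R t z) = (S x, add (f0 x) (w (add y t)))"
      unfolding z R_def using form closed[OF y t(1)] by simp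
    also have "\<dots> = R u (R t (\<Phi> z))"
      unfolding z R_def using form[OF y] hom[OF y t(1)] t(2) by (simp add: assoc)
    finally show ?case .
  qed
  have a4: "AE z in \<nu>. f (R u (R t (\<Phi> z))) = ch u * f (R t (\<Phi> z))"
    by (rule AE_pullback[OF \<Phi> \<Phi>ns AE_pullback[OF R_meas[OF t(1)] R_ns[OF t(1)] ch[OF u]]])
  have a5: "AE z in \<nu>. f (R t (\<Phi> z)) = ch t * f (\<Phi> z)"
    by (rule AE_pullback[OF \<Phi> \<Phi>ns ch[OF t(1)]])
  have "AE z in \<nu>. z \<in> space \<nu> \<and> f (\<Phi> (R t z)) = \<kappa> * f (R t z) \<and> f (R t z) = ch t * f z
     \<and> \<Phi> (R t z) = R u (R t (\<Phi> z)) \<and> f (R u (R t (\<Phi> z))) = ch u * f (R t (\<Phi> z))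
     \<and> f (R t (\<Phi> z)) = ch t * f (\<Phi> z) \<and> f (\<Phi> z) = \<kappa> * f z"
    using AE_space a1 ch[OF t(1)] a3 a4 a5 \<kappa> by eventually_elim blast
  from AE_ex_point[OF this pos\<nu>] obtain z where z: "z \<in> space \<nu>"
    "f (\<Phi> (R t z)) = \<kappa> * f (R t z)" "f (R t z) = ch t * f z"
    "\<Phi> (R t z) = R u (R t (\<Phi> z))" "f (R u (R t (\<Phi> z))) = ch u * f (R t (\<Phi> z))"
    "f (R t (\<Phi> z)) = ch t * f (\<Phi> z)" "f (\<Phi> z) = \<kappa> * f z" by blast
  have nz: "f z' \<noteq> 0" if "z' \<in> space \<nu>" for z'
    using fc[OF that] by (auto simp: circle_norm)
  have sp: "R t z \<in> space \<nu>" "\<Phi> z \<in> space \<nu>"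
    using measurable_space[OF R_meas[OF t(1)] z(1)] measurable_space[OF \<Phi> z(1)] by auto
  have "\<kappa> \<noteq> 0" using z(7) nz[OF sp(2)] by auto
  moreover have "ch t \<noteq> 0" using z(3) nz[OF sp(1)] by auto
  moreover have "\<kappa> * (ch t * f z) = ch u * (ch t * (\<kappa> * f z))"
    using z(2-7) by metis
  ultimately have "ch u = 1" using nz[OF z(1)] by (simp add: field_simps)
  with ch[OF u] show "AE z in \<nu>. f (R u z) = f z" by simp
qed

end
end


lemma closed_circle: "closed circle"
  by (simp add: circle_def)

context skew_setup
begin

lemma invariant_depends_fst:
  assumes P: "prob_space P" and sP: "sets P = sets H"
    and Pnull: "\<And>N. N \<in> null_sets H \<Longrightarrow> N \<in> null_sets P"
    and f[measurable]: "f \<in> borel_measurable \<nu>" and fc: "\<And>z. z \<in> space \<nu> \<Longrightarrow> f z \<in> circle"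
    and inv: "\<forall>u\<in>Gc. AE z in \<nu>. f (R u z) = f z"
  shows "\<exists>g \<in> borel_measurable M. (\<forall>x\<in>space M. g x \<in> circle) \<and> (AE z in \<nu>. f z = g (fst z))"
proof -
  interpret H: sigma_finite_measure H by (rule sfH)
  interpret Pp: prob_space P by (rule P)
  interpret Mp: prob_space M by (rule M)
  have sfn: "sigma_finite_measure \<nu>" by (intro sigma_finite_pair_measure sfH Mp.sigma_finite_measure)
  interpret NH: pair_sigma_finite \<nu> H
    by (intro pair_sigma_finite.intro sfn sfH)
  have Rm: "(\<lambda>p. R (snd p) (fst p)) \<in> \<nu> \<Otimes>\<^sub>M H \<rightarrow>\<^sub>M \<nu>"
  proof -
    have "(\<lambda>p. (fst (fst p), add (snd (fst p)) (snd p))) \<in> \<nu> \<Otimes>\<^sub>M H \<rightarrow>\<^sub>M \<nu>"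
      by (intro measurable_Pair add_meas2 measurable_compose[OF measurable_fst measurable_fst]
          measurable_compose[OF measurable_fst measurable_snd] measurable_snd)
    then show ?thesis by (simp add: R_def case_prod_beta')
  qed
  have meas: "{p \<in> space (\<nu> \<Otimes>\<^sub>M H). f (R (snd p) (fst p)) = f (fst p)} \<in> sets (\<nu> \<Otimes>\<^sub>M H)"
    using Rm[measurable] by measurable
  have "AE t in H. AE z in \<nu>. f (R t z) = f z"
    by (rule AE_I2) (use inv spH in auto)
  then have AE1: "AE z in \<nu>. AE t in H. f (R t z) = f z"
    using NH.AE_commute[OF meas] by simp
  define g0 where "g0 x = (\<integral>s. f (x, s) \<partial>P)" for x
  have fP: "f \<in> borel_measurable (M \<Otimes>\<^sub>M P)"
    using f by (simp add: measurable_cong_sets[OF sets_pair_measure_cong[OF refl sP] refl])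
  have g0m: "g0 \<in> borel_measurable M"
    unfolding g0_def using Pp.borel_measurable_lebesgue_integral[of "\<lambda>x s. f (x, s)" M] fP
    by simp
  have AE2: "AE z in \<nu>. f z = g0 (fst z)"
    using AE1 AE_space
  proof eventually_elim
    case (elim z)
    obtain x y where z: "z = (x, y)" by fastforce
    have x: "x \<in> space M" and y: "y \<in> Gc" using elim z spH by (auto simp: space_pair_measure)
    have fx: "(\<lambda>s. f (x, s)) \<in> borel_measurable H" by (rule measurable_Pair2[OF f x])
    have dy: "distr H H (\<lambda>t. add y t) = H" using transl[OF y] comm by simp
    have addy: "(\<lambda>t. add y t) \<in> H \<rightarrow>\<^sub>M H"
      by (intro add_meas2 measurable_const measurable_ident_sets) (auto simp: spH y)
    have "AE t in H. f (x, add y t) = f (x, y)" using elim(1) by (simp add: z R_def)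
    then have "AE s in distr H H (\<lambda>t. add y t). f (x, s) = f (x, y)"
      by (subst AE_distr_iff[OF addy]) (auto intro: fx[measurable])
    then have "AE s in H. f (x, s) = f (x, y)" unfolding dy .
    then obtain N where N: "N \<in> null_sets H" "{s \<in> space H. \<not> f (x, s) = f (x, y)} \<subseteq> N"
      unfolding eventually_ae_filter by blast
    have "AE s in P. f (x, s) = f (x, y)"
      using N Pnull[OF N(1)] sets_eq_imp_space_eq[OF sP] by (auto intro!: AE_I')
    then have "g0 x = (\<integral>s. f (x, y) \<partial>P)"
      unfolding g0_def
      by (intro integral_cong_AE) (auto simp: measurable_cong_sets[OF sP refl] fx)
    also have "\<dots> = f (x, y)" by (simp add: Pp.prob_space)
    finally show ?case by (simp add: z)
  qed
  define g where "g x = (if g0 x \<in> circle then g0 x else 1)" for x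
  have gm: "g \<in> borel_measurable M"
  proof -
    have [measurable]: "circle \<in> sets borel" using closed_circle by (rule borel_closed)
    show ?thesis unfolding g_def using g0m by measurable
  qed
  have "\<forall>x\<in>space M. g x \<in> circle" by (auto simp: g_def circle_norm)
  moreover have "AE z in \<nu>. f z = g (fst z)"
    using AE2 AE_space by eventually_elim (metis fc g_def)
  ultimately show ?thesis using gm by blast
qed

end


context skew_setup
begin

lemma generic_aperiodic:
  assumes P: "prob_space P" and sP: "sets P = sets H"
    and Pnull: "\<And>N. N \<in> null_sets H \<Longrightarrow> N \<in> null_sets P"
    and \<phi>: "\<phi> \<in> M \<rightarrow>\<^sub>M H" and erg: "ergodic \<nu> (skew T add \<phi>)"
    and w: "w \<in> E_set M T Gc add H \<phi>"
    and surj: "\<And>u. u \<in> Gc \<Longrightarrow> \<exists>t\<in>Gc. w t = add t u"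
  shows "aperiodic M T add H \<phi>"
  unfolding aperiodic_def
proof (intro allI impI)
  fix f :: "'a \<times> 'g \<Rightarrow> complex" and c
  assume asm: "f \<in> borel_measurable \<nu> \<and> (\<forall>z\<in>space \<nu>. f z \<in> circle) \<and> c \<in> circle \<and>
      (AE z in \<nu>. f (skew T add \<phi> z) = c * f z)"
  then have f: "f \<in> borel_measurable \<nu>" and fc: "\<And>z. z \<in> space \<nu> \<Longrightarrow> f z \<in> circle"
    and c: "c \<in> circle" and eig: "AE z in \<nu>. f (skew T add \<phi> z) = c * f z" by auto
  from w obtain S f0 where hom: "\<forall>a\<in>Gc. \<forall>b\<in>Gc. w (add a b) = add (w a) (w b)"
    and ns: "nonsingular \<nu> (\<lambda>(x, y). (S x, add (f0 x) (w y)))"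
    and commu: "AE z in \<nu>. (\<lambda>(x, y). (S x, add (f0 x) (w y))) (skew T add \<phi> z)
                          = skew T add \<phi> ((\<lambda>(x, y). (S x, add (f0 x) (w y))) z)"
    unfolding E_set_def by blast
  let ?\<Phi> = "\<lambda>(x, y). (S x, add (f0 x) (w y))"
  have \<Phi>: "?\<Phi> \<in> \<nu> \<rightarrow>\<^sub>M \<nu>" using ns unfolding nonsingular_def by blast
  have \<Phi>ns: "\<And>A. A \<in> sets \<nu> \<Longrightarrow> emeasure \<nu> A = 0 \<Longrightarrow> emeasure \<nu> (?\<Phi> -` A \<inter> space \<nu>) = 0"
    using ns unfolding nonsingular_def by blast
  have "\<forall>u\<in>Gc. AE z in \<nu>. f (R u z) = f z"
    by (rule translation_invariant[OF \<phi> erg f fc c eig \<Phi> \<Phi>ns commu, of S f0 w])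
       (use hom surj in auto)
  from invariant_depends_fst[OF P sP Pnull f fc this]
  show "\<exists>g\<in>borel_measurable M. (\<forall>x\<in>space M. g x \<in> circle) \<and> (AE z in \<nu>. f z = g (fst z))" .
qed

lemma id_in_E_set:
  assumes \<phi>: "\<phi> \<in> M \<rightarrow>\<^sub>M H" and e: "e \<in> Gc" "\<And>y. add e y = y"
    and w0: "w0 \<in> extensional Gc" "w0 ` Gc = Gc" "continuous_on Gc w0" "\<And>y. y \<in> Gc \<Longrightarrow> w0 y = y"
  shows "w0 \<in> E_set M T Gc add H \<phi>"
proof -
  let ?\<Phi> = "\<lambda>(x, y). ((\<lambda>x. x) x, add ((\<lambda>_. e) x) (w0 y))"
  have eqsp: "?\<Phi> z = z" if "z \<in> space \<nu>" for z
    using that e w0(4) spH by (auto simp: space_pair_measure)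
  have \<Phi>m: "?\<Phi> \<in> \<nu> \<rightarrow>\<^sub>M \<nu>"
    using measurable_cong[of \<nu> ?\<Phi> "\<lambda>z. z"] eqsp by simp
  have pre: "?\<Phi> -` A \<inter> space \<nu> = A" if "A \<in> sets \<nu>" for A
    using sets.sets_into_space[OF that] eqsp by auto
  have "nonsingular \<nu> ?\<Phi>" unfolding nonsingular_def using \<Phi>m pre by simp
  moreover have "nonsingular M (\<lambda>x. x)" unfolding nonsingular_def
    by (auto simp: Int_absorb2 sets.sets_into_space)
  moreover have "AE x in M. x = x" by simp
  moreover have "(\<lambda>_. e) \<in> M \<rightarrow>\<^sub>M H" using e spH by simp
  moreover have "AE z in \<nu>. ?\<Phi> (skew T add \<phi> z) = skew T add \<phi> (?\<Phi> z)"
    using AE_space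
  proof eventually_elim
    case (elim z)
    have "skew T add \<phi> z \<in> space \<nu>" using measurable_space[OF F_meas[OF \<phi>] elim] .
    then show ?case using eqsp elim by simp
  qed
  moreover have "\<forall>a\<in>Gc. \<forall>b\<in>Gc. w0 (add a b) = add (w0 a) (w0 b)"
    using w0(4) closed by simp
  ultimately show ?thesis unfolding E_set_def using w0(1-3) e(1) by blast
qed

end


lemma additive_continuous_linear:
  fixes f :: "real \<Rightarrow> real"
  assumes add: "\<And>x y. f (x + y) = f x + f y" and cont: "continuous_on UNIV f"
  shows "f x = f 1 * x"
proof -
  have f0: "f 0 = 0" using add[of 0 0] by simp
  have fn: "f (real n * y) = real n * f y" for n y
    by (induction n) (auto simp: f0 add distrib_right add.commute)
  have fneg: "f (- y) = - f y" for y using add[of y "-y"] f0 by simp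
  have fi: "f (real_of_int i * y) = real_of_int i * f y" for i y
  proof (cases "i \<ge> 0")
    case True then show ?thesis using fn[of "nat i" y] by simp
  next
    case False then show ?thesis using fn[of "nat (-i)" y] fneg[of "real (nat (-i)) * y"] by simp
  qed
  have fq: "f q = f 1 * q" if "q \<in> \<rat>" for q
  proof -
    obtain a b where ab: "q = real_of_int a / real_of_int b" "b \<noteq> 0"
      using \<open>q \<in> \<rat>\<close> by (auto elim!: Rats_cases')
    have "real_of_int b * f q = f (real_of_int b * q)" by (rule fi[symmetric])
    also have "\<dots> = f (real_of_int a * 1)" using ab by simp
    also have "\<dots> = real_of_int a * f 1" by (rule fi)
    finally have "f q = real_of_int a * f 1 / real_of_int b" using ab(2) by (simp add: field_simps)
    then show ?thesis unfolding ab(1) by simp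
  qed
  have c2: "continuous_on (closure \<rat>) (\<lambda>x. f x - f 1 * x)"
    unfolding Rats_closure_real
    by (intro continuous_on_diff cont continuous_on_mult continuous_on_const continuous_on_id)
  have "(\<lambda>x. f x - f 1 * x) x = 0"
  proof (rule continuous_constant_on_closure[OF c2])
    show "f q - f 1 * q = 0" if "q \<in> \<rat>" for q using fq[OF that] by simp
  qed (simp add: Rats_closure_real)
  then show ?thesis by simp
qed

lemma real_surj:
  fixes w :: "real \<Rightarrow> real"
  assumes add: "\<And>x y. w (x + y) = w x + w y" and cont: "continuous_on UNIV w" and ne: "w \<noteq> id"
  shows "\<exists>t. w t = t + u"
proof -
  have lin: "w x = w 1 * x" for x by (rule additive_continuous_linear[OF add cont])
  have "w 1 \<noteq> 1"
  proof
    assume w1: "w 1 = 1"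
    have "w = id"
    proof
      fix x show "w x = id x" using lin[of x] w1 by simp
    qed
    with ne show False by simp
  qed
  then have "w (u / (w 1 - 1)) = u / (w 1 - 1) + u"
    using lin[of "u / (w 1 - 1)"] by (simp add: field_simps)
  then show ?thesis by blast
qed

lemma real_case:
  fixes M :: "'a measure" and T :: "'a \<Rightarrow> 'a" and \<phi> :: "'a \<Rightarrow> real"
  assumes M: "prob_space M" and Tm: "T \<in> M \<rightarrow>\<^sub>M M" and Td: "distr M M T = M"
    and \<phi>: "\<phi> \<in> borel_measurable M" and erg: "ergodic (M \<Otimes>\<^sub>M lborel) (skew T (+) \<phi>)"
    and E: "E_set M T UNIV (+) lborel \<phi> \<noteq> {id}"
  shows "aperiodic M T (+) lborel \<phi>"
proof -
  have addm: "(\<lambda>p. fst p + snd p) \<in> lborel \<Otimes>\<^sub>M lborel \<rightarrow>\<^sub>M (lborel :: real measure)"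
    by (simp add: measurable_lborel2)
  have transl: "distr lborel lborel (\<lambda>y. y + t) = (lborel :: real measure)" for t :: real
    using lborel_distr_plus[of t] by (simp add: add.commute cong: distr_cong)
  have "skew_setup M T UNIV (+) (lborel :: real measure)"
    unfolding skew_setup_def using M Tm Td lborel.sigma_finite_measure_axioms addm transl
    by (auto simp: add.assoc add.commute)
  then interpret S: skew_setup M T UNIV "(+)" "lborel :: real measure" .
  have \<phi>': "\<phi> \<in> M \<rightarrow>\<^sub>M lborel" using \<phi> by (simp add: measurable_lborel2)
  have idE: "id \<in> E_set M T UNIV (+) lborel \<phi>"
    by (rule S.id_in_E_set[OF \<phi>', of 0]) auto
  obtain w where w: "w \<in> E_set M T UNIV (+) lborel \<phi>" "w \<noteq> id"
    using E idE by blast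
  have wadd: "w (x + y) = w x + w y" and wc: "continuous_on UNIV w" for x y
    using w(1) unfolding E_set_def by auto
  let ?P = "uniform_measure lborel {0..1::real}"
  show ?thesis
  proof (rule S.generic_aperiodic[OF _ _ _ \<phi>' erg w(1)])
    show "prob_space ?P" by (intro prob_space_uniform_measure) auto
    show "sets ?P = sets lborel" by simp
    show "N \<in> null_sets ?P" if "N \<in> null_sets lborel" for N
    proof -
      have "emeasure lborel ({0..1} \<inter> N) \<le> emeasure lborel N"
        using that by (intro emeasure_mono) auto
      then have "emeasure lborel ({0..1} \<inter> N) = 0"
        using that by (simp add: null_sets_def)
      then show ?thesis using that by (simp add: null_sets_def)
    qed
    show "\<exists>t\<in>UNIV. w t = t + u" for u using real_surj[OF wadd wc w(2)] by blast
  qed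
qed


abbreviation "L01 \<equiv> restrict_space lborel {0..<1::real}"
abbreviation "E2 \<equiv> (\<lambda>t::real. cis (2 * pi * t))"

lemma circle_borel[measurable]: "circle \<in> sets borel"
  by (simp add: circle_def borel_closed)

lemma E2_circle: "E2 t \<in> circle"
  by (simp add: circle_def)

lemma E2_borel[measurable]: "E2 \<in> borel_measurable borel"
  by (intro borel_measurable_continuous_onI continuous_intros)

lemma E2_meas: "E2 \<in> L01 \<rightarrow>\<^sub>M restrict_space borel circle"
  by (intro measurable_restrict_space2 measurable_restrict_space1)
     (auto simp: E2_circle measurable_lborel1)

lemma space_CM: "space circle_measure = circle"
  by (simp add: circle_measure_def space_restrict_space)

lemma sets_CM: "sets circle_measure = sets (restrict_space borel circle)"
  by (simp add: circle_measure_def)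

lemma sets_CM_iff: "A \<in> sets circle_measure \<longleftrightarrow> A \<subseteq> circle \<and> A \<in> sets borel"
  unfolding sets_CM by (subst sets_restrict_space_iff) auto

lemma L01_prob: "prob_space L01"
proof (rule prob_spaceI)
  show "emeasure L01 (space L01) = 1"
    by (simp add: space_restrict_space emeasure_restrict_space)
qed

lemma CM_prob: "prob_space circle_measure"
  unfolding circle_measure_def
  by (rule prob_space.prob_space_distr[OF L01_prob E2_meas])

lemma emeasure_CM:
  assumes A: "A \<in> sets circle_measure"
  shows "emeasure circle_measure A = emeasure lborel ({0..<1} \<inter> {s. E2 s \<in> A})"
proof -
  have Ab: "A \<in> sets borel" using A sets_CM_iff by blast
  have "emeasure circle_measure A = emeasure L01 (E2 -` A \<inter> space L01)"
    unfolding circle_measure_def using A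
    by (subst emeasure_distr[OF E2_meas]) (auto simp: circle_measure_def)
  also have "\<dots> = emeasure lborel ({0..<1} \<inter> {s. E2 s \<in> A})"
    by (subst emeasure_restrict_space) (auto simp: space_restrict_space Int_commute vimage_def)
  finally show ?thesis .
qed

lemma lborel_shift:
  fixes c :: real
  assumes X: "X \<in> sets borel"
  shows "emeasure lborel ((\<lambda>s. s + c) -` X) = emeasure lborel X"
proof -
  have "emeasure (distr lborel borel ((+) c)) X = emeasure lborel ((+) c -` X \<inter> space lborel)"
    using X by (intro emeasure_distr) auto
  moreover have "(\<lambda>s. s + c) -` X = (+) c -` X" by (auto simp: add.commute)
  ultimately show ?thesis using lborel_distr_plus[of c] by simp
qed

lemma periodic_split:
  fixes B :: "real set" and a :: real
  assumes B: "B \<in> sets borel" and per: "\<And>u. u \<in> B \<longleftrightarrow> u + 1 \<in> B" and a: "0 \<le> a" "a < 1"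
  shows "emeasure lborel ({0..<1} \<inter> {s. s + a \<in> B}) = emeasure lborel ({0..<1} \<inter> B)"
proof -
  have s1: "{0..<1} \<inter> {s. s + a \<in> B} = ({0..<1-a} \<inter> {s. s + a \<in> B}) \<union> ({1-a..<1} \<inter> {s. s + a \<in> B})"
    using a by auto
  have e1: "{0..<1-a} \<inter> {s. s + a \<in> B} = (\<lambda>s. s + a) -` ({a..<1} \<inter> B)"
    by auto
  have e2: "{1-a..<1} \<inter> {s. s + a \<in> B} = (\<lambda>s. s + (a - 1)) -` ({0..<a} \<inter> B)"
  proof -
    have "s + a \<in> B \<longleftrightarrow> s + (a - 1) \<in> B" for s using per[of "s + (a - 1)"] by simp
    then show ?thesis by auto
  qed
  have "emeasure lborel ({0..<1} \<inter> {s. s + a \<in> B})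
      = emeasure lborel ({0..<1-a} \<inter> {s. s + a \<in> B}) + emeasure lborel ({1-a..<1} \<inter> {s. s + a \<in> B})"
    unfolding s1 by (rule plus_emeasure[symmetric]) (use B in \<open>auto\<close>)
  also have "\<dots> = emeasure lborel ({a..<1} \<inter> B) + emeasure lborel ({0..<a} \<inter> B)"
  proof -
    have "emeasure lborel ((\<lambda>s. s + a) -` ({a..<1} \<inter> B)) = emeasure lborel ({a..<1} \<inter> B)"
      by (rule lborel_shift) (use B in auto)
    moreover have "emeasure lborel ((\<lambda>s. s + (a - 1)) -` ({0..<a} \<inter> B)) = emeasure lborel ({0..<a} \<inter> B)"
      by (rule lborel_shift) (use B in auto)
    ultimately show ?thesis unfolding e1 e2 by simp
  qed
  also have "\<dots> = emeasure lborel (({a..<1} \<inter> B) \<union> ({0..<a} \<inter> B))"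
    by (rule plus_emeasure) (use B in \<open>auto\<close>)
  also have "({a..<1} \<inter> B) \<union> ({0..<a} \<inter> B) = {0..<1} \<inter> B" using a by auto
  finally show ?thesis .
qed

lemma CM_rotation:
  assumes t: "t \<in> circle"
  shows "distr circle_measure circle_measure (\<lambda>y. y * t) = circle_measure"
proof -
  have tn: "norm t = 1" using t by (simp add: circle_def)
  define a where "a = frac (Arg t / (2 * pi))"
  have a: "0 \<le> a" "a < 1" unfolding a_def by (auto simp: frac_lt_1)
  have ta: "t = E2 a"
  proof -
    have "t \<noteq> 0" using tn by auto
    then have "cis (Arg t) = t" using tn by (simp add: cis_Arg sgn_div_norm)
    then have "t = cis (Arg t)" by simp
    also have "Arg t = 2 * pi * (Arg t / (2 * pi))" by simp
    also have "Arg t / (2 * pi) = a + of_int \<lfloor>Arg t / (2 * pi)\<rfloor>" unfolding a_def by (simp add: frac_def)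
    also have "cis (2 * pi * (a + of_int \<lfloor>Arg t / (2 * pi)\<rfloor>)) = E2 a"
      proof -
        have "cis (2 * pi * (a + of_int \<lfloor>Arg t / (2 * pi)\<rfloor>)) = cis (2 * pi * a) * cis (2 * pi * of_int \<lfloor>Arg t / (2 * pi)\<rfloor>)"
          by (simp only: cis_mult distrib_left)
        also have "cis (2 * pi * of_int \<lfloor>Arg t / (2 * pi)\<rfloor>) = 1"
          by (rule cis_multiple_2pi) simp
        finally show ?thesis by (metis mult.right_neutral)
      qed
    finally show ?thesis .
  qed
  have rm: "(\<lambda>y. y * t) \<in> circle_measure \<rightarrow>\<^sub>M circle_measure"
  proof -
    have "(\<lambda>y. y * t) \<in> restrict_space borel circle \<rightarrow>\<^sub>M restrict_space borel circle"
      proof (intro measurable_restrict_space2 measurable_restrict_space1)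
        show "(\<lambda>y. y * t) \<in> space (restrict_space borel circle) \<rightarrow> circle"
          by (auto simp: circle_def norm_mult tn space_restrict_space)
      qed simp
    then show ?thesis by (simp add: measurable_cong_sets[OF sets_CM sets_CM])
  qed
  show ?thesis
  proof (rule measure_eqI)
    show "sets (distr circle_measure circle_measure (\<lambda>y. y * t)) = sets circle_measure" by simp
    fix A assume "A \<in> sets (distr circle_measure circle_measure (\<lambda>y. y * t))"
    then have A: "A \<in> sets circle_measure" by simp
    then have Ab: "A \<in> sets borel" and Ac: "A \<subseteq> circle" using sets_CM_iff by auto
    define B where "B = {s. E2 s \<in> A}"
    have Bb: "B \<in> sets borel" unfolding B_def using Ab by measurable
    have per: "u \<in> B \<longleftrightarrow> u + 1 \<in> B" for u
    proof -
      have "E2 (u + 1) = E2 u" by (simp add: distrib_left cis_mult[symmetric])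
      then show ?thesis unfolding B_def by simp
    qed
    have pre: "(\<lambda>y. y * t) -` A \<inter> space circle_measure \<in> sets circle_measure"
      using measurable_sets[OF rm A] .
    have "emeasure (distr circle_measure circle_measure (\<lambda>y. y * t)) A
        = emeasure circle_measure ((\<lambda>y. y * t) -` A \<inter> space circle_measure)"
      by (rule emeasure_distr[OF rm A])
    also have "\<dots> = emeasure lborel ({0..<1} \<inter> {s. E2 s \<in> (\<lambda>y. y * t) -` A \<inter> space circle_measure})"
      by (rule emeasure_CM[OF pre])
    also have "{s. E2 s \<in> (\<lambda>y. y * t) -` A \<inter> space circle_measure} = {s. s + a \<in> B}"
      proof -
        have "E2 s * t = E2 (s + a)" for s unfolding ta by (simp add: cis_mult distrib_left)
        then show ?thesis unfolding B_def space_CM using E2_circle by auto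
      qed
    also have "emeasure lborel ({0..<1} \<inter> {s. s + a \<in> B}) = emeasure lborel ({0..<1} \<inter> B)"
      by (rule periodic_split[OF Bb per a])
    also have "\<dots> = emeasure circle_measure A" unfolding B_def by (rule emeasure_CM[OF A, symmetric])
    finally show "emeasure (distr circle_measure circle_measure (\<lambda>y. y * t)) A = emeasure circle_measure A" .
  qed
qed


lemma exp1_sep:
  fixes z z' :: complex
  assumes "exp z = 1" "exp z' = 1" "z \<noteq> z'"
  shows "2 * pi \<le> norm (z - z')"
proof -
  obtain n :: int where n: "Re z = 0" "Im z = of_int (2 * n) * pi" using assms(1) exp_eq_1 by blast
  obtain m :: int where m: "Re z' = 0" "Im z' = of_int (2 * m) * pi" using assms(2) exp_eq_1 by blast
  have "n \<noteq> m" using n m assms(3) by (auto simp: complex_eq_iff)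
  then have "1 \<le> \<bar>n - m\<bar>" by linarith
  then have "(1::real) \<le> of_int \<bar>n - m\<bar>" by simp
  then have "1 \<le> \<bar>real_of_int n - real_of_int m\<bar>" by simp
  then have "2 * pi \<le> 2 * pi * \<bar>real_of_int n - real_of_int m\<bar>" by simp
  also have "\<dots> = \<bar>Im (z - z')\<bar>"
  proof -
    have "Im (z - z') = 2 * pi * (real_of_int n - real_of_int m)" using n m by (simp add: algebra_simps)
    then show ?thesis by (simp add: abs_mult)
  qed
  also have "\<dots> \<le> norm (z - z')" by (rule abs_Im_le_cmod)
  finally show ?thesis .
qed

lemma circle_surj:
  fixes w :: "complex \<Rightarrow> complex"
  assumes cont: "continuous_on circle w" and img: "w ` circle = circle"
    and hom: "\<And>a b. a \<in> circle \<Longrightarrow> b \<in> circle \<Longrightarrow> w (a * b) = w a * w b"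
    and ne: "\<exists>y\<in>circle. w y \<noteq> y" and u: "u \<in> circle"
  shows "\<exists>t\<in>circle. w t = t * u"
proof -
  have cisc: "cis s \<in> circle" for s by (simp add: circle_def)
  have wc: "w y \<in> circle" if "y \<in> circle" for y using img that by blast
  have cnz: "z \<in> circle \<Longrightarrow> z \<noteq> 0" for z by (auto simp: circle_def)
  define h where "h s = w (cis s) / cis s" for s
  have hcont: "continuous_on UNIV h"
  proof -
    have "continuous_on UNIV (\<lambda>s. w (cis s))"
      by (rule continuous_on_compose2[OF cont continuous_on_cis[OF continuous_on_id]]) (auto simp: cisc)
    then show ?thesis unfolding h_def by (intro continuous_on_divide continuous_on_cis continuous_on_id) auto
  qed
  have hc: "h s \<in> circle" for s
    using wc[OF cisc[of s]] by (simp add: h_def circle_def norm_divide)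
  have hmul: "h (s + r) = h s * h r" for s r
    unfolding h_def by (simp add: cis_mult[symmetric] hom cisc)
  obtain g where gc: "continuous_on UNIV g" and hg0: "\<And>s. s \<in> UNIV \<Longrightarrow> h s = exp (g s)"
    using continuous_logarithm_on_contractible[OF hcont contractible_UNIV] cnz[OF hc] by blast
  then have hg: "h s = exp (g s)" for s by simp
  have gadd: "g (s + r) = g s + g r - g 0" for s r
  proof -
    define D where "D s = g (s + r) - g s - g r" for s
    have De: "exp (D s) = 1" for s
    proof -
      have "exp (D s) = h (s + r) / (h s * h r)" by (simp add: D_def hg exp_diff)
      then show ?thesis using hmul[of s r] cnz[OF hc[of s]] cnz[OF hc[of r]] by simp
    qed
    have "D constant_on UNIV"
    proof (rule continuous_discrete_range_constant[OF connected_UNIV])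
      show "continuous_on UNIV D" unfolding D_def
        by (intro continuous_on_diff continuous_on_compose2[OF gc] continuous_on_add continuous_on_id
            continuous_on_const gc) auto
      show "\<exists>e>0. \<forall>y. y \<in> UNIV \<and> D y \<noteq> D x \<longrightarrow> e \<le> norm (D y - D x)" for x
        using exp1_sep[OF De De] by (intro exI[of _ "2 * pi"]) auto
    qed
    then have "D s = D 0" unfolding constant_on_def by auto
    then have e: "g (s + r) - g s - g r = - g 0" by (simp add: D_def)
    show ?thesis using e by algebra
  qed
  define G where "G s = g s - g 0" for s
  have Gadd: "G (s + r) = G s + G r" for s r unfolding G_def using gadd[of s r] by simp
  have Gc: "continuous_on UNIV G" unfolding G_def by (intro continuous_on_diff gc continuous_on_const)
  have ReG: "Re (G s) = Re (G 1) * s" for s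
    by (rule additive_continuous_linear) (use Gadd Gc in \<open>auto intro: continuous_on_Re\<close>)
  have ImG: "Im (G s) = Im (G 1) * s" for s
    by (rule additive_continuous_linear) (use Gadd Gc in \<open>auto intro: continuous_on_Im\<close>)
  define \<beta> where "\<beta> = G 1"
  have Gs: "G s = of_real s * \<beta>" for s using ReG[of s] ImG[of s] by (simp add: complex_eq_iff \<beta>_def)
  have w1: "w 1 = 1"
  proof -
    have 1: "(1::complex) \<in> circle" by (simp add: circle_def)
    have "w 1 = w 1 * w 1" using hom[OF 1 1] by simp
    then show ?thesis using cnz[OF wc[OF 1]] by simp
  qed
  have eg0: "exp (g 0) = 1" using hg[of 0] w1 by (simp add: h_def)
  have hexp: "h s = exp (of_real s * \<beta>)" for s
  proof -
    have "h s = exp (g 0 + G s)" unfolding hg G_def by simp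
    also have "\<dots> = exp (of_real s * \<beta>)" by (simp add: exp_add eg0 Gs)
    finally show ?thesis .
  qed
  have Reb: "Re \<beta> = 0"
  proof -
    have "norm (h 1) = 1" using hc[of 1] by (simp add: circle_def)
    then show ?thesis by (simp add: hexp)
  qed
  define b where "b = Im \<beta>"
  have bb: "\<beta> = \<i> * of_real b" using Reb by (simp add: complex_eq_iff b_def)
  have hcis: "h s = cis (b * s)" for s by (simp add: hexp bb cis_conv_exp mult_ac)
  have bnz: "b \<noteq> 0"
  proof
    assume "b = 0"
    then have "w (cis s) = cis s" for s using hcis[of s] cnz[OF cisc[of s]] by (simp add: h_def)
    moreover have "y = cis (Arg y)" if "y \<in> circle" for y
      using that cis_Arg[of y] cnz[OF that] by (simp add: sgn_div_norm circle_def)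
    ultimately have "w y = y" if "y \<in> circle" for y
    proof -
      have e: "y = cis (Arg y)" using that by fact
      have "w y = w (cis (Arg y))" using e by (rule arg_cong)
      also have "\<dots> = cis (Arg y)" by fact
      also have "\<dots> = y" using e[symmetric] .
      finally show ?thesis .
    qed
    with ne show False by blast
  qed
  define s where "s = Arg u / b"
  have "h s = u"
  proof -
    have "h s = cis (Arg u)" unfolding hcis s_def using bnz by simp
    also have "\<dots> = u" using cis_Arg[of u] cnz[OF u] u by (simp add: sgn_div_norm circle_def)
    finally show ?thesis .
  qed
  then have "w (cis s) = cis s * u" unfolding h_def using cnz[OF cisc[of s]] by (simp add: field_simps)
  then show ?thesis using cisc by blast
qed


lemma circle_case:
  fixes M :: "'a measure" and T :: "'a \<Rightarrow> 'a" and \<phi> :: "'a \<Rightarrow> complex"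
  assumes M: "prob_space M" and Tm: "T \<in> M \<rightarrow>\<^sub>M M" and Td: "distr M M T = M"
    and \<phi>: "\<phi> \<in> M \<rightarrow>\<^sub>M circle_measure"
    and erg: "ergodic (M \<Otimes>\<^sub>M circle_measure) (skew T (*) \<phi>)"
    and E: "E_set M T circle (*) circle_measure \<phi> \<noteq> {restrict id circle}"
  shows "aperiodic M T (*) circle_measure \<phi>"
proof -
  have sfC: "sigma_finite_measure circle_measure"
    using CM_prob by (simp add: prob_space_def finite_measure_def)
  have idb: "(\<lambda>x. x) \<in> circle_measure \<rightarrow>\<^sub>M borel"
    by (simp add: measurable_cong_sets[OF sets_CM refl] measurable_restrict_space1)
  have addm: "(\<lambda>p. fst p * snd p) \<in> circle_measure \<Otimes>\<^sub>M circle_measure \<rightarrow>\<^sub>M circle_measure"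
  proof -
    have b: "(\<lambda>p. fst p * snd p) \<in> borel_measurable (circle_measure \<Otimes>\<^sub>M circle_measure)"
      using measurable_compose[OF measurable_fst idb] measurable_compose[OF measurable_snd idb]
      by (intro borel_measurable_times) auto
    have "(\<lambda>p. fst p * snd p) \<in> circle_measure \<Otimes>\<^sub>M circle_measure \<rightarrow>\<^sub>M restrict_space borel circle"
      by (rule measurable_restrict_space2[OF _ b])
         (auto simp: space_pair_measure space_CM circle_def norm_mult)
    then show ?thesis by (simp add: measurable_cong_sets[OF refl sets_CM])
  qed
  have pos: "emeasure circle_measure circle \<noteq> 0"
    using prob_space.emeasure_space_1[OF CM_prob] by (simp add: space_CM)
  have "skew_setup M T circle (*) circle_measure"
    unfolding skew_setup_def using M Tm Td sfC addm pos CM_rotation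
    by (auto simp: space_CM mult.assoc mult.commute)
  then interpret S: skew_setup M T circle "(*)" circle_measure .
  have one: "(1::complex) \<in> circle" by (simp add: circle_def)
  have idE: "restrict id circle \<in> E_set M T circle (*) circle_measure \<phi>"
  proof (rule S.id_in_E_set[OF \<phi> one])
    show "restrict id circle ` circle = circle" by auto
    show "continuous_on circle (restrict id circle)"
      by (rule continuous_on_cong[THEN iffD2, OF refl _ continuous_on_id]) simp
  qed auto
  obtain w where w: "w \<in> E_set M T circle (*) circle_measure \<phi>" "w \<noteq> restrict id circle"
    using E idE by blast
  have wext: "w \<in> extensional circle" and wimg: "w ` circle = circle" and wc: "continuous_on circle w"
    and whom: "\<And>a b. a \<in> circle \<Longrightarrow> b \<in> circle \<Longrightarrow> w (a * b) = w a * w b"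
    using w(1) unfolding E_set_def by auto
  have ne: "\<exists>y\<in>circle. w y \<noteq> y"
  proof (rule ccontr)
    assume "\<not> ?thesis"
    then have "w = restrict id circle"
      by (intro extensionalityI[OF wext]) auto
    with w(2) show False by simp
  qed
  show ?thesis
  proof (rule S.generic_aperiodic[OF CM_prob refl _ \<phi> erg w(1)])
    show "N \<in> null_sets circle_measure" if "N \<in> null_sets circle_measure" for N using that .
    show "\<exists>t\<in>circle. w t = t * u" if "u \<in> circle" for u
      by (rule circle_surj[OF wc wimg whom ne that])
  qed
qed


theorem proposition2p1:
  fixes M :: "'a::polish_space measure" and T :: "'a \<Rightarrow> 'a"
  assumes "prob_space M"
    and "sets M = sets borel"
    and "T \<in> M \<rightarrow>\<^sub>M M" and "distr M M T = M"
    and "ergodic M T"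
  shows "(\<forall>\<phi> :: 'a \<Rightarrow> real.
            \<phi> \<in> borel_measurable M \<and> ergodic (M \<Otimes>\<^sub>M lborel) (skew T (+) \<phi>) \<and>
            E_set M T UNIV (+) lborel \<phi> \<noteq> {id}
            \<longrightarrow> aperiodic M T (+) lborel \<phi>)
       \<and> (\<forall>\<phi> :: 'a \<Rightarrow> complex.
            \<phi> \<in> M \<rightarrow>\<^sub>M circle_measure \<and> (\<forall>x\<in>space M. \<phi> x \<in> circle) \<and>
            ergodic (M \<Otimes>\<^sub>M circle_measure) (skew T (*) \<phi>) \<and>
            E_set M T circle (*) circle_measure \<phi> \<noteq> {restrict id circle}
            \<longrightarrow> aperiodic M T (*) circle_measure \<phi>)"
proof (intro conjI allI impI)
  fix \<phi> :: "'a \<Rightarrow> real"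
  assume h: "\<phi> \<in> borel_measurable M \<and> ergodic (M \<Otimes>\<^sub>M lborel) (skew T (+) \<phi>) \<and>
            E_set M T UNIV (+) lborel \<phi> \<noteq> {id}"
  then show "aperiodic M T (+) lborel \<phi>"
    using real_case[OF assms(1,3,4)] by blast
next
  fix \<phi> :: "'a \<Rightarrow> complex"
  assume h: "\<phi> \<in> M \<rightarrow>\<^sub>M circle_measure \<and> (\<forall>x\<in>space M. \<phi> x \<in> circle) \<and>
            ergodic (M \<Otimes>\<^sub>M circle_measure) (skew T (*) \<phi>) \<and>
            E_set M T circle (*) circle_measure \<phi> \<noteq> {restrict id circle}"
  then show "aperiodic M T (*) circle_measure \<phi>"
    using circle_case[OF assms(1,3,4)] by blast
qed

end
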